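(* Let the setting of the context hold, fix $x\in\mathcal{X}$, and assume $|\mathcal{L}_f(z,t)|\le M$ and $|g_t(z)|\le G$ for all $z$ and $t\in\{0,1\}$. Then $$\epsilon_f(x)\le 2\Big[G^2\big(\epsilon_{F,0}(x)+\epsilon_{F,1}(x)+M\,\mathbb{D}(x)\big)-\mathbb{V}_Y(x)\Big],$$ where $\mathbb{D}(x):=\sum_{t\in\{0,1\}}\sqrt{D_{\mathrm{KL}}(q_t(\cdot\mid x)\,\Vert\, q_{1-t}(\cdot\mid x))/2}$ and $\mathbb{V}_Y(x):=\mathbb{E}_{q(z\mid x)}\sum_{t}\mathbb{E}_{p_{Y(t)\mid\mathbb{P}_t}(y\mid z)}(y-j_t(z))^2$.
   Context: Binary treatment $T\in\{0,1\}$, covariates $X\in\mathcal{X}$, real-valued (univariate) potential outcomes $Y(t)$, observed $Y=Y(T)$, observational distribution $p(x,y,t)$, exchangeability $Y(t)\perp T\mid X$. Data generating assumption: $Y=f^*(\mathbb{M}(X),T)+e$ with $e$ zero-mean exogenous noise, and $\mu_t(X):=\mathbb{E}(Y(t)\mid X)=j_t(\mathbb{P}_t(X))$ for functions $\mathbb{P}_t$ and injective $j_t$, where $\mathbb{P}_t$ satisfies $Y(t)\perp X\mid\mathbb{P}_t(X)$; $p_{Y(t)\mid\mathbb{P}_t}(y\mid P)$ denotes the conditional density of $Y(t)$ given $\mathbb{P}_t(X)=P$. Let $f_t,g_t$ ($t=0,1$) be functions of $z$ and $q_\phi(z\mid x,y,t)$ any conditional density (encoder). Define $q_t(z\mid x):=\mathbb{E}_{p(y\mid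 x,t)}q_\phi(z\mid x,y,t)$ and $q(z\mid x):=\mathbb{E}_{p(y,t\mid x)}q_\phi(z\mid x,y,t)$. Define $\mathcal{L}_f(z,t):=g_t(z)^{-2}\int(y-f_t(z))^2p_{Y(t)\mid\mathbb{P}_t}(y\mid z)\,dy$, $\epsilon_{F,t}(x):=\mathbb{E}_{q_t(z\mid x)}\mathcal{L}_f(z,t)$, $\epsilon_{CF,t}(x):=\mathbb{E}_{q_{1-t}(z\mid x)}\mathcal{L}_f(z,t)$, $\hat\tau_f(z):=f_1(z)-f_0(z)$, $\tau_j(z):=j_1(z)-j_0(z)$, and $\epsilon_f(x):=\mathbb{E}_{q(z\mid x)}(\hat\tau_f(z)-\tau_j(z))^2$. *)

theory Defs
  imports "HOL-Probability.Probability"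
begin

text \<open>Binary treatment t :: bool (True = 1, False = 0; 1 - t is \<not> t).
  Latent space: a measure space N (reference measure); all latent densities are w.r.t. N.\<close>

definition q_t :: "('x \<Rightarrow> real \<Rightarrow> bool \<Rightarrow> 'z \<Rightarrow> real) \<Rightarrow> ('x \<Rightarrow> bool \<Rightarrow> real \<Rightarrow> real)
                   \<Rightarrow> 'x \<Rightarrow> bool \<Rightarrow> 'z \<Rightarrow> real" where
  "q_t qphi py x t z = (\<integral>y. py x t y * qphi x y t z \<partial>lborel)"

definition q_mix :: "('x \<Rightarrow> real \<Rightarrow> bool \<Rightarrow> 'z \<Rightarrow> real) \<Rightarrow> ('x \<Rightarrow> bool \<Rightarrow> real \<Rightarrow> real)
                   \<Rightarrow> ('x \<Rightarrow> bool \<Rightarrow> real) \<Rightarrow> 'x \<Rightarrow> 'z \<Rightarrow> real" where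
  "q_mix qphi py pt x z = (\<Sum>t\<in>UNIV. pt x t * q_t qphi py x t z)"

definition L_f :: "(bool \<Rightarrow> 'z \<Rightarrow> real) \<Rightarrow> (bool \<Rightarrow> 'z \<Rightarrow> real) \<Rightarrow> (bool \<Rightarrow> 'z \<Rightarrow> real \<Rightarrow> real)
                   \<Rightarrow> 'z \<Rightarrow> bool \<Rightarrow> real" where
  "L_f f g pY z t = inverse ((g t z)\<^sup>2) * (\<integral>y. (y - f t z)\<^sup>2 * pY t z y \<partial>lborel)"

definition eps_F :: "'z measure \<Rightarrow> ('x \<Rightarrow> real \<Rightarrow> bool \<Rightarrow> 'z \<Rightarrow> real) \<Rightarrow> ('x \<Rightarrow> bool \<Rightarrow> real \<Rightarrow> real)
    \<Rightarrow> (bool \<Rightarrow> 'z \<Rightarrow> real) \<Rightarrow> (bool \<Rightarrow> 'z \<Rightarrow> real) \<Rightarrow> (bool \<Rightarrow> 'z \<Rightarrow> real \<Rightarrow> real)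
    \<Rightarrow> 'x \<Rightarrow> bool \<Rightarrow> real" where
  "eps_F N qphi py f g pY x t = (\<integral>z. q_t qphi py x t z * L_f f g pY z t \<partial>N)"

definition eps_f :: "'z measure \<Rightarrow> ('x \<Rightarrow> real \<Rightarrow> bool \<Rightarrow> 'z \<Rightarrow> real) \<Rightarrow> ('x \<Rightarrow> bool \<Rightarrow> real \<Rightarrow> real)
    \<Rightarrow> ('x \<Rightarrow> bool \<Rightarrow> real) \<Rightarrow> (bool \<Rightarrow> 'z \<Rightarrow> real) \<Rightarrow> (bool \<Rightarrow> 'z \<Rightarrow> real) \<Rightarrow> 'x \<Rightarrow> real" where
  "eps_f N qphi py pt f j x =
     (\<integral>z. q_mix qphi py pt x z * ((f True z - f False z) - (j True z - j False z))\<^sup>2 \<partial>N)"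

text \<open>Kullback-Leibler divergence D_KL(P || Q) (natural logarithm) of two densities on N,
  via the library notion: KL_divergence b Q P = \<integral> log_b (dP/dQ) dP.\<close>
definition D_KL :: "'z measure \<Rightarrow> ('z \<Rightarrow> real) \<Rightarrow> ('z \<Rightarrow> real) \<Rightarrow> real" where
  "D_KL N p q = KL_divergence (exp 1) (density N (\<lambda>z. ennreal (q z))) (density N (\<lambda>z. ennreal (p z)))"

definition D_bal :: "'z measure \<Rightarrow> ('x \<Rightarrow> real \<Rightarrow> bool \<Rightarrow> 'z \<Rightarrow> real) \<Rightarrow> ('x \<Rightarrow> bool \<Rightarrow> real \<Rightarrow> real)
    \<Rightarrow> 'x \<Rightarrow> real" where
  "D_bal N qphi py x = (\<Sum>t\<in>UNIV. sqrt (D_KL N (q_t qphi py x t) (q_t qphi py x (\<not> t)) / 2))"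

definition V_Y :: "'z measure \<Rightarrow> ('x \<Rightarrow> real \<Rightarrow> bool \<Rightarrow> 'z \<Rightarrow> real) \<Rightarrow> ('x \<Rightarrow> bool \<Rightarrow> real \<Rightarrow> real)
    \<Rightarrow> ('x \<Rightarrow> bool \<Rightarrow> real) \<Rightarrow> (bool \<Rightarrow> 'z \<Rightarrow> real) \<Rightarrow> (bool \<Rightarrow> 'z \<Rightarrow> real \<Rightarrow> real) \<Rightarrow> 'x \<Rightarrow> real" where
  "V_Y N qphi py pt j pY x =
     (\<integral>z. q_mix qphi py pt x z * (\<Sum>t\<in>UNIV. \<integral>y. (y - j t z)\<^sup>2 * pY t z y \<partial>lborel) \<partial>N)"

end

theory Submission
  imports Defs
begin


lemma ln_ge_R:
  fixes u :: real assumes u: "u > 0"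
  shows "(u-1)*(5*u+1) / (2*u*(u+2)) \<le> ln u"
proof -
  define k where "k = (\<lambda>u::real. ln u - (u-1)*(5*u+1) / (2*u*(u+2)))"
  have D: "DERIV k v :> (v-1)^3 / (v^2*(v+2)^2)" if v: "v > 0" for v
  proof -
    have "DERIV k v :> 1/v - ((( 5 * v + 1 + (v - 1) * 5) * (2 * v * (v + 2)) - (v - 1) * (5 * v + 1) * (2 * (v + 2) + 2 * v)) / (2 * v * (v + 2))^2)"
      unfolding k_def using v
      by (auto intro!: derivative_eq_intros simp: power2_eq_square)
    moreover have "1/v - ((( 5 * v + 1 + (v - 1) * 5) * (2 * v * (v + 2)) - (v - 1) * (5 * v + 1) * (2 * (v + 2) + 2 * v)) / (2 * v * (v + 2))^2)
      = (v-1)^3 / (v^2*(v+2)^2)"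
      proof -
        have "v + 2 \<noteq> 0" "v \<noteq> 0" using v by auto
        then show ?thesis by (simp add: divide_simps power2_eq_square power3_eq_cube) (simp add: algebra_simps)
      qed
    ultimately show ?thesis by simp
  qed
  have k1: "k 1 = 0" by (simp add: k_def)
  have C: "continuous_on {a..b} k" if "a > 0" for a b
    by (rule continuous_at_imp_continuous_on) (use that in \<open>auto intro!: DERIV_isCont[OF D]\<close>)
  have "k u \<ge> 0"
  proof (cases "u \<ge> 1")
    case True
    have "k 1 \<le> k u"
    proof (rule DERIV_nonneg_imp_increasing_open[OF True])
      fix x :: real assume x: "1 < x" "x < u"
      have "(x - 1)^3 / (x\<^sup>2 * (x + 2)\<^sup>2) \<ge> 0" using x by simp
      then show "\<exists>y. DERIV k x :> y \<and> y \<ge> 0" using D[of x] x by auto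
    qed (rule C, simp)
    then show ?thesis using k1 by simp
  next
    case False
    have "k u \<ge> k 1"
    proof (rule DERIV_nonpos_imp_decreasing_open[of u 1 k])
      show "u \<le> 1" using False by simp
      fix x :: real assume x: "u < x" "x < 1"
      have "(x - 1)^3 \<le> 0" using x by simp
      then have "(x - 1)^3 / (x\<^sup>2 * (x + 2)\<^sup>2) \<le> 0" by (simp add: divide_nonpos_nonneg)
      then show "\<exists>y. DERIV k x :> y \<and> y \<le> 0" using D[of x] x u by auto
    qed (rule C, rule u)
    then show ?thesis using k1 by simp
  qed
  then show ?thesis by (simp add: k_def)
qed

lemma sq_bound:
  fixes u :: real assumes u: "u > 0"
  shows "3 * (u - 1)^2 \<le> (2*u+4) * (u * ln u - u + 1)"
proof -
  have R: "(u-1)*(5*u+1) / (2*u*(u+2)) \<le> ln u" by (rule ln_ge_R[OF u])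
  have pos: "2*u*(u+2) > 0" using u by simp
  have "(u-1)*(5*u+1) \<le> ln u * (2*u*(u+2))" using R pos by (simp add: divide_le_eq)
  then have "(u-1)*(5*u+1) - (2*u+4)*(u-1) \<le> (2*u+4) * (u * ln u - u + 1)"
    by (simp add: algebra_simps)
  moreover have "(u-1)*(5*u+1) - (2*u+4)*(u-1) = 3 * (u - 1)^2" by (simp add: algebra_simps power2_eq_square)
  ultimately show ?thesis by simp
qed

lemma pw_u:
  fixes u l :: real assumes u: "u > 0" and l: "l > 0"
  shows "\<bar>u - 1\<bar> \<le> (l * ((2*u+4)/3) + (u * ln u - u + 1) / l) / 2"
proof -
  define a where "a = (2*u+4)/3"
  define ph where "ph = u * ln u - u + 1"
  have "ln (inverse u) \<le> inverse u - 1" by (rule ln_le_minus_one) (use u in simp)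
  moreover have "ln (inverse u) = - ln u" using u by (simp add: ln_inverse)
  ultimately have "- ln u \<le> 1/u - 1" using u by (simp add: field_simps)
  then have "u * (- ln u) \<le> u * (1/u - 1)" using u by (intro mult_left_mono) auto
  then have ph0: "ph \<ge> 0" using u by (simp add: ph_def algebra_simps)
  have a0: "a > 0" using u by (simp add: a_def)
  have key: "(u-1)^2 \<le> a * ph" using sq_bound[OF u] by (simp add: a_def ph_def)
  have "0 \<le> (l*a - ph/l)^2" by simp
  then have "4 * (a * ph) \<le> (l*a + ph/l)^2" using l
    by (simp add: power2_eq_square field_simps)
  with key have "(2 * \<bar>u - 1\<bar>)^2 \<le> (l*a + ph/l)^2" by (simp add: power_mult_distrib)
  moreover have "0 \<le> l*a + ph/l" using l a0 ph0 by simp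
  ultimately have "2 * \<bar>u - 1\<bar> \<le> l*a + ph/l" by (rule power2_le_imp_le)
  then show ?thesis by (simp add: a_def ph_def)
qed

lemma pw:
  fixes p r l :: real assumes p: "p \<ge> 0" and r: "r \<ge> 0" and l: "l > 0" and ac: "r = 0 \<longrightarrow> p = 0"
  shows "\<bar>p - r\<bar> \<le> (l * ((2*p+4*r)/3) + (p * ln (p / r) - p + r) / l) / 2"
proof (cases "p = 0")
  case True
  have "0 \<le> (2*l - 3/2)^2 + 3/4" by simp
  then have "2 * l \<le> l * l * 4/3 + 1" by (simp add: power2_eq_square algebra_simps)
  then have "2 \<le> l * 4/3 + 1/l" using l by (simp add: field_simps)
  then have "r * 2 \<le> r * (l * 4/3 + 1/l)" using r by (rule mult_left_mono)
  then show ?thesis using True r l by (simp add: field_simps)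
next
  case False
  then have p0: "p > 0" and r0: "r > 0" using p r ac by auto
  define u where "u = p / r"
  have u: "u > 0" using p0 r0 by (simp add: u_def)
  have "r * \<bar>u - 1\<bar> \<le> r * ((l * ((2*u+4)/3) + (u * ln u - u + 1) / l) / 2)"
    using pw_u[OF u l] r0 by (intro mult_left_mono) auto
  moreover have "r * \<bar>u - 1\<bar> = \<bar>r * (u - 1)\<bar>" using r0 by (simp add: abs_mult)
  moreover have "r * (u - 1) = p - r" using r0 by (simp add: u_def field_simps)
  moreover have "r * ((l * ((2*u+4)/3) + (u * ln u - u + 1) / l) / 2)
      = (l * ((2*p+4*r)/3) + (p * ln (p / r) - p + r) / l) / 2"
    using r0 l by (simp add: u_def field_simps)
  ultimately show ?thesis by simp
qed



lemma gibbs_pw: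
  fixes p r :: real assumes p: "p \<ge> 0" and r: "r \<ge> 0" and ac: "r = 0 \<longrightarrow> p = 0"
  shows "p - r \<le> p * ln (p / r)"
proof (cases "p = 0")
  case True then show ?thesis using r by simp
next
  case False
  then have p0: "p > 0" and r0: "r > 0" using p r ac by auto
  have "ln (r / p) \<le> r / p - 1" by (rule ln_le_minus_one) (use p0 r0 in simp)
  moreover have "ln (r / p) = - ln (p / r)" using p0 r0 by (simp add: ln_div)
  ultimately have "1 - r/p \<le> ln (p / r)" by simp
  then have "p * (1 - r/p) \<le> p * ln (p / r)" using p0 by (intro mult_left_mono) auto
  moreover have "p * (1 - r/p) = p - r" using p0 by (simp add: field_simps)
  ultimately show ?thesis by simp
qed

lemma pinsker_int:
  fixes N :: "'z measure" and p r L :: "'z \<Rightarrow> real" and M :: real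
  assumes [measurable]: "p \<in> borel_measurable N" "r \<in> borel_measurable N" "L \<in> borel_measurable N"
  and pn: "\<And>z. z \<in> space N \<Longrightarrow> 0 \<le> p z" and rn: "\<And>z. z \<in> space N \<Longrightarrow> 0 \<le> r z"
  and L0: "\<And>z. z \<in> space N \<Longrightarrow> 0 \<le> L z" and LM: "\<And>z. z \<in> space N \<Longrightarrow> L z \<le> M"
  and M0: "0 \<le> M"
  and ip: "integrable N p" and ir: "integrable N r" and p1: "integral\<^sup>L N p = 1" and r1: "integral\<^sup>L N r = 1"
  and ac: "AE z in N. r z = 0 \<longrightarrow> p z = 0"
  and ik: "integrable N (\<lambda>z. p z * ln (p z / r z))"
  shows "0 \<le> (\<integral>z. p z * ln (p z / r z) \<partial>N)"
    and "(\<integral>z. r z * L z \<partial>N) - (\<integral>z. p z * L z \<partial>N) \<le> M * sqrt ((\<integral>z. p z * ln (p z / r z) \<partial>N) / 2)"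
proof -
  define K where "K = (\<integral>z. p z * ln (p z / r z) \<partial>N)"
  have "(\<integral>z. p z - r z \<partial>N) \<le> K" unfolding K_def
    by (rule integral_mono_AE) (use ip ir ik ac pn rn gibbs_pw in auto)
  then show K0: "0 \<le> (\<integral>z. p z * ln (p z / r z) \<partial>N)" using ip ir p1 r1 by (simp add: K_def)
  have ipL: "integrable N (\<lambda>z. p z * L z)"
  proof (rule Bochner_Integration.integrable_bound[of _ "\<lambda>z. M * p z"])
    show "integrable N (\<lambda>z. M * p z)" using ip by simp
    show "AE z in N. norm (p z * L z) \<le> norm (M * p z)"
    proof (rule AE_I2)
      fix z assume z: "z \<in> space N"
      have "p z * L z \<le> p z * M" using z pn LM by (intro mult_left_mono) auto
      then show "norm (p z * L z) \<le> norm (M * p z)" using z pn L0 M0 by (simp add: abs_mult mult.commute)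
    qed
  qed simp
  have irL: "integrable N (\<lambda>z. r z * L z)"
  proof (rule Bochner_Integration.integrable_bound[of _ "\<lambda>z. M * r z"])
    show "integrable N (\<lambda>z. M * r z)" using ir by simp
    show "AE z in N. norm (r z * L z) \<le> norm (M * r z)"
    proof (rule AE_I2)
      fix z assume z: "z \<in> space N"
      have "r z * L z \<le> r z * M" using z rn LM by (intro mult_left_mono) auto
      then show "norm (r z * L z) \<le> norm (M * r z)" using z rn L0 M0 by (simp add: abs_mult mult.commute)
    qed
  qed simp
  have main: "(\<integral>z. r z * L z \<partial>N) - (\<integral>z. p z * L z \<partial>N) \<le> M * (l + K / (2*l)) / 2" if l: "l > 0" for l
  proof -
    define A where "A = M/2*(l/3 - 1/(2*l) - 1)"
    define B where "B = M/2*(2*l/3 + 1/(2*l) + 1)"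
    define C where "C = M/(4*l)"
    have "(\<integral>z. r z * L z - p z * L z \<partial>N) \<le> (\<integral>z. A * p z + B * r z + C * (p z * ln (p z / r z)) \<partial>N)"
    proof (rule integral_mono_AE)
      show "integrable N (\<lambda>z. r z * L z - p z * L z)" using ipL irL by simp
      show "integrable N (\<lambda>z. A * p z + B * r z + C * (p z * ln (p z / r z)))" using ip ir ik by simp
      show "AE z in N. r z * L z - p z * L z \<le> A * p z + B * r z + C * (p z * ln (p z / r z))"
        using ac AE_space
      proof eventually_elim
        case (elim z)
        have pz: "0 \<le> p z" and rz: "0 \<le> r z" using elim pn rn by auto
        have Lz: "0 \<le> L z" "L z \<le> M" using elim L0 LM by auto
        have pwz: "\<bar>p z - r z\<bar> \<le> (l * ((2*p z+4*r z)/3) + (p z * ln (p z / r z) - p z + r z) / l) / 2"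
          by (rule pw[OF pz rz l]) (use elim in simp)
        have s1: "(r z - p z) * L z \<le> M * (\<bar>p z - r z\<bar> + (r z - p z)) / 2"
        proof (cases "r z \<ge> p z")
          case True
          then have "(r z - p z) * L z \<le> (r z - p z) * M" using Lz by (intro mult_left_mono) auto
          then show ?thesis using True by (simp add: algebra_simps)
        next
          case False
          then have "(r z - p z) * L z \<le> 0" using Lz by (simp add: mult_nonpos_nonneg)
          then show ?thesis using False by simp
        qed
        also have "\<dots> \<le> M * ((l * ((2*p z+4*r z)/3) + (p z * ln (p z / r z) - p z + r z) / l) / 2 + (r z - p z)) / 2"
          using pwz M0 by (intro divide_right_mono mult_left_mono) auto
        also have "\<dots> = A * p z + B * r z + C * (p z * ln (p z / r z))"
          using l by (simp add: A_def B_def C_def field_simps)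
        finally show ?case by (simp add: algebra_simps)
      qed
    qed
    also have "\<dots> = A + B + C * K" using ip ir ik p1 r1 by (simp add: K_def)
    also have "\<dots> = M * (l + K / (2*l)) / 2" using l by (simp add: A_def B_def C_def field_simps)
    finally show ?thesis using ipL irL by simp
  qed
  have K0': "0 \<le> K" using K0 by (simp add: K_def)
  have "(\<integral>z. r z * L z \<partial>N) - (\<integral>z. p z * L z \<partial>N) \<le> M * sqrt (K / 2)"
  proof (cases "K = 0")
    case True
    have "(\<integral>z. r z * L z \<partial>N) - (\<integral>z. p z * L z \<partial>N) \<le> 0"
    proof (rule field_le_epsilon)
      fix e :: real assume e: "0 < e"
      show "(\<integral>z. r z * L z \<partial>N) - (\<integral>z. p z * L z \<partial>N) \<le> 0 + e"
      proof (cases "M = 0")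
        case True
        then show ?thesis using main[of 1] e by simp
      next
        case False
        then have Mp: "M > 0" using M0 by simp
        have "(\<integral>z. r z * L z \<partial>N) - (\<integral>z. p z * L z \<partial>N) \<le> M * ((e/M) + K / (2*(e/M))) / 2"
          by (rule main) (use e Mp in simp)
        also have "\<dots> \<le> e" using True Mp e by simp
        finally show ?thesis by simp
      qed
    qed
    then show ?thesis using True by simp
  next
    case False
    then have Kp: "K > 0" using K0' by simp
    define sK where "sK = sqrt (K/2)"
    have sKp: "sK > 0" using Kp by (simp add: sK_def)
    have sKs: "sK * sK = K / 2" using K0' by (simp add: sK_def)
    have "(\<integral>z. r z * L z \<partial>N) - (\<integral>z. p z * L z \<partial>N) \<le> M * (sK + K / (2 * sK)) / 2"
      by (rule main[OF sKp])
    also have "K / (2 * sK) = sK" using sKp sKs by (simp add: field_simps)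
    finally show ?thesis by (simp add: sK_def) 
  qed
  then show "(\<integral>z. r z * L z \<partial>N) - (\<integral>z. p z * L z \<partial>N) \<le> M * sqrt ((\<integral>z. p z * ln (p z / r z) \<partial>N) / 2)"
    by (simp add: K_def)
qed



lemma qt_props:
  fixes N :: "'z measure" and py :: "real \<Rightarrow> real" and Q :: "real \<Rightarrow> 'z \<Rightarrow> real"
  assumes N: "sigma_finite_measure N"
  and pym[measurable]: "py \<in> borel_measurable lborel" and pyn: "\<And>y. 0 \<le> py y"
  and py1: "(\<integral>\<^sup>+ y. ennreal (py y) \<partial>lborel) = 1"
  and Qm: "(\<lambda>(y, z). Q y z) \<in> borel_measurable (lborel \<Otimes>\<^sub>M N)"
  and Qn: "\<And>y z. z \<in> space N \<Longrightarrow> 0 \<le> Q y z"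
  and Q1: "\<And>y. (\<integral>\<^sup>+ z. ennreal (Q y z) \<partial>N) = 1"
  shows "(\<lambda>z. \<integral>y. py y * Q y z \<partial>lborel) \<in> borel_measurable N"
    and "\<And>z. z \<in> space N \<Longrightarrow> 0 \<le> (\<integral>y. py y * Q y z \<partial>lborel)"
    and "integrable N (\<lambda>z. \<integral>y. py y * Q y z \<partial>lborel)"
    and "(\<integral>z. (\<integral>y. py y * Q y z \<partial>lborel) \<partial>N) = 1"
proof -
  interpret N: sigma_finite_measure N by (rule N)
  interpret P: pair_sigma_finite lborel N
    by (intro pair_sigma_finite.intro lborel.sigma_finite_measure_axioms N)
  have Qm'[measurable]: "(\<lambda>w. Q (fst w) (snd w)) \<in> borel_measurable (lborel \<Otimes>\<^sub>M N)"
    using Qm by (simp add: case_prod_beta')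
  have Qy[measurable]: "Q y \<in> borel_measurable N" for y
    using measurable_compose[OF measurable_Pair1'[of y lborel N] Qm'] by simp
  have Qs[measurable]: "(\<lambda>w. Q (snd w) (fst w)) \<in> borel_measurable (N \<Otimes>\<^sub>M lborel)"
    using measurable_pair_swap[OF Qm'] by (simp add: case_prod_beta')
  have F2[measurable]: "(\<lambda>w. py (snd w) * Q (snd w) (fst w)) \<in> borel_measurable (N \<Otimes>\<^sub>M lborel)"
    by measurable
  show qm[measurable]: "(\<lambda>z. \<integral>y. py y * Q y z \<partial>lborel) \<in> borel_measurable N"
    by (rule lborel.borel_measurable_lebesgue_integral) (use F2 in \<open>simp add: case_prod_beta'\<close>)
  show qn: "\<And>z. z \<in> space N \<Longrightarrow> 0 \<le> (\<integral>y. py y * Q y z \<partial>lborel)"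
    using pyn Qn by (auto intro!: integral_nonneg)
  define F where "F z = (\<integral>\<^sup>+ y. ennreal (py y * Q y z) \<partial>lborel)" for z
  have Fm[measurable]: "F \<in> borel_measurable N" unfolding F_def by measurable
  have "(\<integral>\<^sup>+ z. F z \<partial>N) = (\<integral>\<^sup>+ y. (\<integral>\<^sup>+ z. ennreal (py y * Q y z) \<partial>N) \<partial>lborel)"
    unfolding F_def by (rule P.Fubini') (use Qm' in \<open>simp add: case_prod_beta'\<close>)
  also have "\<dots> = (\<integral>\<^sup>+ y. ennreal (py y) \<partial>lborel)"
  proof (rule nn_integral_cong)
    fix y
    have "(\<integral>\<^sup>+ z. ennreal (py y * Q y z) \<partial>N) = (\<integral>\<^sup>+ z. ennreal (py y) * ennreal (Q y z) \<partial>N)"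
      by (rule nn_integral_cong) (use pyn Qn in \<open>simp add: ennreal_mult\<close>)
    also have "\<dots> = ennreal (py y) * (\<integral>\<^sup>+ z. ennreal (Q y z) \<partial>N)"
      by (rule nn_integral_cmult) measurable
    finally show "(\<integral>\<^sup>+ z. ennreal (py y * Q y z) \<partial>N) = ennreal (py y)" using Q1 by simp
  qed
  finally have F1: "(\<integral>\<^sup>+ z. F z \<partial>N) = 1" using py1 by simp
  have "AE z in N. F z \<noteq> \<infinity>" by (rule nn_integral_PInf_AE) (use F1 in auto)
  then have "AE z in N. ennreal (\<integral>y. py y * Q y z \<partial>lborel) = F z"
  proof (rule AE_mp[OF _ AE_I2[OF impI]])
    fix z assume z: "z \<in> space N" and Fz: "F z \<noteq> \<infinity>"
    have [measurable]: "(\<lambda>y. Q y z) \<in> borel_measurable lborel"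
      using measurable_compose[OF measurable_Pair2'[of z N lborel] Qm'] z by simp
    have "(\<integral>y. py y * Q y z \<partial>lborel) = enn2real (F z)"
      unfolding F_def by (rule integral_eq_nn_integral) (use z pyn Qn in auto)
    then show "ennreal (\<integral>y. py y * Q y z \<partial>lborel) = F z" using Fz
      by (simp add: ennreal_enn2real_if)
  qed
  then have E1: "(\<integral>\<^sup>+ z. ennreal (\<integral>y. py y * Q y z \<partial>lborel) \<partial>N) = 1"
    using F1 by (simp add: nn_integral_cong_AE)
  show "integrable N (\<lambda>z. \<integral>y. py y * Q y z \<partial>lborel)"
    by (rule integrableI_nonneg) (use qn E1 in auto)
  show "(\<integral>z. (\<integral>y. py y * Q y z \<partial>lborel) \<partial>N) = 1"
    by (subst integral_eq_nn_integral) (use qn E1 in auto)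
qed



lemma var_decomp:
  fixes pd :: "real \<Rightarrow> real" and c m :: real
  assumes pm[measurable]: "pd \<in> borel_measurable lborel" and pn: "\<And>y. 0 \<le> pd y"
  and p1: "(\<integral>\<^sup>+ y. ennreal (pd y) \<partial>lborel) = 1"
  and sq: "integrable lborel (\<lambda>y. y\<^sup>2 * pd y)"
  and mean: "(\<integral>y. y * pd y \<partial>lborel) = m"
  shows "integrable lborel (\<lambda>y. (y - c)\<^sup>2 * pd y)"
    and "(\<integral>y. (y - c)\<^sup>2 * pd y \<partial>lborel) = (\<integral>y. y\<^sup>2 * pd y \<partial>lborel) - 2 * c * m + c\<^sup>2"
proof -
  have ip: "integrable lborel pd" by (rule integrableI_nonneg) (use pn p1 in auto)
  have ip1: "integral\<^sup>L lborel pd = 1" by (subst integral_eq_nn_integral) (use pn p1 in auto)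
  have iy: "integrable lborel (\<lambda>y. y * pd y)"
  proof (rule Bochner_Integration.integrable_bound[of _ "\<lambda>y. y\<^sup>2 * pd y + pd y"])
    show "integrable lborel (\<lambda>y. y\<^sup>2 * pd y + pd y)" using sq ip by simp
    show "AE y in lborel. norm (y * pd y) \<le> norm (y\<^sup>2 * pd y + pd y)"
    proof (rule AE_I2)
      fix y :: real
      have a: "\<bar>y\<bar> \<le> y\<^sup>2 + 1"
      proof (cases "\<bar>y\<bar> \<le> 1")
        case True then show ?thesis by (simp add: add_increasing)
      next
        case False
        then have "\<bar>y\<bar> * 1 \<le> \<bar>y\<bar> * \<bar>y\<bar>" by (intro mult_left_mono) auto
        then show ?thesis by (simp add: power2_eq_square abs_mult[symmetric])
      qed
      have "\<bar>y\<bar> * pd y \<le> (y\<^sup>2 + 1) * pd y" using a pn by (intro mult_right_mono) auto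
      then show "norm (y * pd y) \<le> norm (y\<^sup>2 * pd y + pd y)" using pn
        by (simp add: abs_mult algebra_simps)
    qed
  qed simp
  have eq: "(\<lambda>y. (y - c)\<^sup>2 * pd y) = (\<lambda>y. y\<^sup>2 * pd y - (2 * c) * (y * pd y) + c\<^sup>2 * pd y)"
    by (rule ext) (simp add: power2_eq_square algebra_simps)
  show "integrable lborel (\<lambda>y. (y - c)\<^sup>2 * pd y)" unfolding eq using sq iy ip by simp
  show "(\<integral>y. (y - c)\<^sup>2 * pd y \<partial>lborel) = (\<integral>y. y\<^sup>2 * pd y \<partial>lborel) - 2 * c * m + c\<^sup>2"
    unfolding eq using sq iy ip ip1 mean by simp
qed


lemma integrable_bdd_mult:
  fixes N :: "'z measure" and q h :: "'z \<Rightarrow> real" and B :: real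
  assumes iq: "integrable N q" and qn: "\<And>z. z \<in> space N \<Longrightarrow> 0 \<le> q z"
  and hm: "h \<in> borel_measurable N" and hb: "\<And>z. z \<in> space N \<Longrightarrow> \<bar>h z\<bar> \<le> B"
  shows "integrable N (\<lambda>z. q z * h z)"
proof (rule Bochner_Integration.integrable_bound[of _ "\<lambda>z. B * q z"])
  show "integrable N (\<lambda>z. B * q z)" using iq by simp
  have qm: "q \<in> borel_measurable N" using iq by (rule borel_measurable_integrable)
  show "(\<lambda>z. q z * h z) \<in> borel_measurable N" using qm hm by measurable
  show "AE z in N. norm (q z * h z) \<le> norm (B * q z)"
  proof (rule AE_I2)
    fix z assume z: "z \<in> space N"
    have "q z * \<bar>h z\<bar> \<le> q z * B" using z qn hb by (intro mult_left_mono) auto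
    moreover have "0 \<le> B" using hb[OF z] by simp
    ultimately show "norm (q z * h z) \<le> norm (B * q z)" using z qn by (simp add: abs_mult mult.commute)
  qed
qed

lemma sum_bool: "(\<Sum>t\<in>UNIV. h t) = h True + (h False :: real)"
  by (simp add: UNIV_bool)

theorem theorem2:
  fixes N :: "'z measure"
    and qphi :: "'x \<Rightarrow> real \<Rightarrow> bool \<Rightarrow> 'z \<Rightarrow> real"
    and py :: "'x \<Rightarrow> bool \<Rightarrow> real \<Rightarrow> real"
    and pt :: "'x \<Rightarrow> bool \<Rightarrow> real"
    and pY :: "bool \<Rightarrow> 'z \<Rightarrow> real \<Rightarrow> real"
    and f g j :: "bool \<Rightarrow> 'z \<Rightarrow> real"
    and x :: 'x
    and M G :: real
  assumes N: "sigma_finite_measure N"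
    \<comment> \<open>p(t|x): a probability distribution on {0,1}\<close>
    and pt_nonneg: "\<And>t. 0 \<le> pt x t"
    and pt_sum: "pt x True + pt x False = 1"
    \<comment> \<open>p(y|x,t): a probability density on the reals\<close>
    and py_meas: "\<And>t. py x t \<in> borel_measurable lborel"
    and py_nonneg: "\<And>t y. 0 \<le> py x t y"
    and py_norm: "\<And>t. (\<integral>\<^sup>+ y. ennreal (py x t y) \<partial>lborel) = 1"
    \<comment> \<open>encoder q_phi(z|x,y,t): a conditional probability density on the latent space\<close>
    and qphi_meas: "\<And>t. (\<lambda>(y, z). qphi x y t z) \<in> borel_measurable (lborel \<Otimes>\<^sub>M N)"
    and qphi_nonneg: "\<And>y t z. z \<in> space N \<Longrightarrow> 0 \<le> qphi x y t z"
    and qphi_norm: "\<And>y t. (\<integral>\<^sup>+ z. ennreal (qphi x y t z) \<partial>N) = 1"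
    \<comment> \<open>p_{Y(t)|P_t}(y|z): conditional densities of Y(t) given P_t(X) = z, with finite second
        moment and mean j_t(z) (since mu_t(X) = j_t(P_t(X)) and Y(t) indep. of X given P_t(X))\<close>
    and pY_meas: "\<And>t. (\<lambda>(z, y). pY t z y) \<in> borel_measurable (N \<Otimes>\<^sub>M lborel)"
    and pY_nonneg: "\<And>t z y. z \<in> space N \<Longrightarrow> 0 \<le> pY t z y"
    and pY_norm: "\<And>t z. z \<in> space N \<Longrightarrow> (\<integral>\<^sup>+ y. ennreal (pY t z y) \<partial>lborel) = 1"
    and pY_sq: "\<And>t z. z \<in> space N \<Longrightarrow> integrable lborel (\<lambda>y. y\<^sup>2 * pY t z y)"
    and pY_mean: "\<And>t z. z \<in> space N \<Longrightarrow> (\<integral>y. y * pY t z y \<partial>lborel) = j t z"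
    and j_inj: "\<And>t. inj_on (j t) (space N)"
    \<comment> \<open>the functions f_t, g_t, j_t of z\<close>
    and f_meas: "\<And>t. f t \<in> borel_measurable N"
    and g_meas: "\<And>t. g t \<in> borel_measurable N"
    and j_meas: "\<And>t. j t \<in> borel_measurable N"
    and g_nz: "\<And>t z. z \<in> space N \<Longrightarrow> g t z \<noteq> 0"
    \<comment> \<open>the bounds of the theorem\<close>
    and L_bound: "\<And>t z. z \<in> space N \<Longrightarrow> \<bar>L_f f g pY z t\<bar> \<le> M"
    and g_bound: "\<And>t z. z \<in> space N \<Longrightarrow> \<bar>g t z\<bar> \<le> G"
    \<comment> \<open>finiteness of the KL divergences D_KL(q_t || q_{1-t})\<close>
    and KL_ac: "\<And>t. AE z in N. q_t qphi py x (\<not> t) z = 0 \<longrightarrow> q_t qphi py x t z = 0"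
    and KL_int: "\<And>t. integrable N (\<lambda>z. q_t qphi py x t z * ln (q_t qphi py x t z / q_t qphi py x (\<not> t) z))"
  shows "eps_f N qphi py pt f j x
           \<le> 2 * (G\<^sup>2 * (eps_F N qphi py f g pY x False + eps_F N qphi py f g pY x True
                        + M * D_bal N qphi py x)
                  - V_Y N qphi py pt j pY x)"
  proof -
  interpret N: sigma_finite_measure N by (rule N)
  have ne: "space N \<noteq> {}"
  proof
    assume "space N = {}"
    then have "N = count_space {}" by (rule space_empty)
    then have "(\<integral>\<^sup>+ z. ennreal (qphi x 0 True z) \<partial>N) = 0" by (simp add: nn_integral_count_space_finite)
    then show False using qphi_norm[of 0 True] by simp
  qed
  then obtain z0 where z0: "z0 \<in> space N" by blast
  have M0: "0 \<le> M" using L_bound[OF z0, of True] by simp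
  have G0: "0 \<le> G" using g_bound[OF z0, of True] by simp
  let ?q = "q_t qphi py x"
  have qprops: "?q t \<in> borel_measurable N \<and> (\<forall>z\<in>space N. 0 \<le> ?q t z) \<and> integrable N (?q t) \<and> integral\<^sup>L N (?q t) = 1" for t
  proof -
    note Q = qt_props[OF N py_meas[of t] py_nonneg py_norm[of t], of "\<lambda>y z. qphi x y t z", OF qphi_meas[of t] qphi_nonneg qphi_norm]
    show ?thesis using Q unfolding q_t_def by auto
  qed
  have qm[measurable]: "?q t \<in> borel_measurable N" for t using qprops by auto
  have qn: "z \<in> space N \<Longrightarrow> 0 \<le> ?q t z" for t z using qprops by auto
  have qi: "integrable N (?q t)" for t using qprops by auto
  have q1: "integral\<^sup>L N (?q t) = 1" for t using qprops by auto
  have pYm[measurable]: "(\<lambda>w. pY t (fst w) (snd w)) \<in> borel_measurable (N \<Otimes>\<^sub>M lborel)" for t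
    using pY_meas[of t] by (simp add: case_prod_beta')
  have fm[measurable]: "f t \<in> borel_measurable N" for t by (rule f_meas)
  have gm[measurable]: "g t \<in> borel_measurable N" for t by (rule g_meas)
  have jm[measurable]: "j t \<in> borel_measurable N" for t by (rule j_meas)
  define S where "S t z = (\<integral>y. (y - f t z)\<^sup>2 * pY t z y \<partial>lborel)" for t z
  define V where "V t z = (\<integral>y. (y - j t z)\<^sup>2 * pY t z y \<partial>lborel)" for t z
  have Sm[measurable]: "S t \<in> borel_measurable N" for t
    unfolding S_def by (rule lborel.borel_measurable_lebesgue_integral) (simp add: case_prod_beta')
  have Vm[measurable]: "V t \<in> borel_measurable N" for t
    unfolding V_def by (rule lborel.borel_measurable_lebesgue_integral) (simp add: case_prod_beta')
  have Leq: "L_f f g pY z t = inverse ((g t z)\<^sup>2) * S t z" for t z by (simp add: L_f_def S_def)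
  have Lm[measurable]: "(\<lambda>z. L_f f g pY z t) \<in> borel_measurable N" for t
    unfolding Leq by measurable
  have pw: "0 \<le> L_f f g pY z t \<and> L_f f g pY z t \<le> M \<and> 0 \<le> V t z \<and> V t z \<le> G\<^sup>2 * M
      \<and> (f t z - j t z)\<^sup>2 \<le> G\<^sup>2 * L_f f g pY z t - V t z" if z: "z \<in> space N" for t z
  proof -
    have pd[measurable]: "(\<lambda>y. pY t z y) \<in> borel_measurable lborel"
      using measurable_compose[OF measurable_Pair1'[of z N lborel] pYm[of t]] z by simp
    note VD = var_decomp[OF pd pY_nonneg[OF z] pY_norm[OF z] pY_sq[OF z] pY_mean[OF z]]
    have SV: "S t z = V t z + (f t z - j t z)\<^sup>2"
      unfolding S_def V_def VD(2)[of "f t z"] VD(2)[of "j t z"] by (simp add: power2_eq_square algebra_simps)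
    have S0: "0 \<le> S t z" unfolding S_def using pY_nonneg[OF z] by (auto intro!: integral_nonneg)
    have V0: "0 \<le> V t z" unfolding V_def using pY_nonneg[OF z] by (auto intro!: integral_nonneg)
    have gz: "g t z \<noteq> 0" by (rule g_nz[OF z])
    have L0: "0 \<le> L_f f g pY z t" unfolding Leq using S0 by simp
    have LM: "L_f f g pY z t \<le> M" using L_bound[OF z, of t] by simp
    have gL: "(g t z)\<^sup>2 * L_f f g pY z t = S t z" unfolding Leq using gz by simp
    have gG: "(g t z)\<^sup>2 \<le> G\<^sup>2" using g_bound[OF z, of t] by (metis abs_ge_zero abs_le_square_iff abs_of_nonneg order_trans)
    have "(g t z)\<^sup>2 * L_f f g pY z t \<le> G\<^sup>2 * L_f f g pY z t" using gG L0 by (rule mult_right_mono)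
    moreover have "G\<^sup>2 * L_f f g pY z t \<le> G\<^sup>2 * M" using LM by (intro mult_left_mono) auto
    moreover have "0 \<le> (f t z - j t z)\<^sup>2" by simp
    ultimately show ?thesis using SV gL L0 LM V0 by linarith
  qed
  define qm where "qm z = q_mix qphi py pt x z" for z
  have qm_eq: "qm z = pt x True * ?q True z + pt x False * ?q False z" for z
    unfolding qm_def q_mix_def sum_bool by simp
  have qmm[measurable]: "qm \<in> borel_measurable N" unfolding qm_eq[abs_def] by measurable
  have qmn: "0 \<le> qm z" if "z \<in> space N" for z
    unfolding qm_eq using that qn pt_nonneg by (intro add_nonneg_nonneg mult_nonneg_nonneg) auto
  have qmi: "integrable N qm" unfolding qm_eq[abs_def] using qi by simp
  have iL: "integrable N (\<lambda>z. qm z * L_f f g pY z t)" for t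
    by (rule integrable_bdd_mult[OF qmi qmn Lm, where B=M]) (use pw in auto)
  have iqL: "integrable N (\<lambda>z. ?q s z * L_f f g pY z t)" for s t
    by (rule integrable_bdd_mult[OF qi qn Lm, where B=M]) (use pw in auto)
  have iV: "integrable N (\<lambda>z. qm z * (V True z + V False z))"
  proof (rule integrable_bdd_mult[OF qmi qmn, where B="2 * (G\<^sup>2 * M)"])
    show "(\<lambda>z. V True z + V False z) \<in> borel_measurable N" by measurable
    fix z assume z: "z \<in> space N"
    show "\<bar>V True z + V False z\<bar> \<le> 2 * (G\<^sup>2 * M)" using pw[OF z, of True] pw[OF z, of False] by auto
  qed
  have pwD: "((f True z - f False z) - (j True z - j False z))\<^sup>2
      \<le> 2 * (G\<^sup>2 * (L_f f g pY z False + L_f f g pY z True) - (V True z + V False z))" if z: "z \<in> space N" for z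
  proof -
    define a where "a = f True z - j True z"
    define b where "b = f False z - j False z"
    have "((f True z - f False z) - (j True z - j False z))\<^sup>2 = (a - b)\<^sup>2" by (simp add: a_def b_def algebra_simps)
    also have "\<dots> \<le> 2 * (a\<^sup>2 + b\<^sup>2)"
    proof -
      have "0 \<le> (a + b)\<^sup>2" by simp
      then show ?thesis by (simp add: power2_eq_square algebra_simps)
    qed
    also have "\<dots> \<le> 2 * (G\<^sup>2 * (L_f f g pY z False + L_f f g pY z True) - (V True z + V False z))"
      using pw[OF z, of True] pw[OF z, of False] by (simp add: a_def b_def algebra_simps)
    finally show ?thesis .
  qed
  have iD: "integrable N (\<lambda>z. qm z * ((f True z - f False z) - (j True z - j False z))\<^sup>2)"
  proof (rule integrable_bdd_mult[OF qmi qmn, where B="2 * (G\<^sup>2 * (M + M))"])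
    show "(\<lambda>z. ((f True z - f False z) - (j True z - j False z))\<^sup>2) \<in> borel_measurable N" by measurable
    fix z assume z: "z \<in> space N"
    have "G\<^sup>2 * (L_f f g pY z False + L_f f g pY z True) \<le> G\<^sup>2 * (M + M)"
      using pw[OF z, of True] pw[OF z, of False] by (intro mult_left_mono) auto
    then show "\<bar>((f True z - f False z) - (j True z - j False z))\<^sup>2\<bar> \<le> 2 * (G\<^sup>2 * (M + M))"
      using pwD[OF z] pw[OF z, of True] pw[OF z, of False] by simp
  qed
  have epsf: "eps_f N qphi py pt f j x = (\<integral>z. qm z * ((f True z - f False z) - (j True z - j False z))\<^sup>2 \<partial>N)"
    unfolding eps_f_def qm_def ..
  have VY: "V_Y N qphi py pt j pY x = (\<integral>z. qm z * (V True z + V False z) \<partial>N)"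
    unfolding V_Y_def qm_def sum_bool V_def ..
  have step1: "eps_f N qphi py pt f j x \<le>
      2 * (G\<^sup>2 * ((\<integral>z. qm z * L_f f g pY z False \<partial>N) + (\<integral>z. qm z * L_f f g pY z True \<partial>N)) - V_Y N qphi py pt j pY x)"
  proof -
    have "eps_f N qphi py pt f j x \<le> (\<integral>z. 2 * (G\<^sup>2 * (qm z * L_f f g pY z False + qm z * L_f f g pY z True) - qm z * (V True z + V False z)) \<partial>N)"
      unfolding epsf
    proof (rule integral_mono[OF iD])
      show "integrable N (\<lambda>z. 2 * (G\<^sup>2 * (qm z * L_f f g pY z False + qm z * L_f f g pY z True) - qm z * (V True z + V False z)))"
        using iL iV by simp
      fix z assume z: "z \<in> space N"
      have "qm z * ((f True z - f False z) - (j True z - j False z))\<^sup>2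
         \<le> qm z * (2 * (G\<^sup>2 * (L_f f g pY z False + L_f f g pY z True) - (V True z + V False z)))"
        using pwD[OF z] qmn[OF z] by (rule mult_left_mono)
      then show "qm z * ((f True z - f False z) - (j True z - j False z))\<^sup>2
         \<le> 2 * (G\<^sup>2 * (qm z * L_f f g pY z False + qm z * L_f f g pY z True) - qm z * (V True z + V False z))"
        by (simp add: algebra_simps)
    qed
    also have "\<dots> = 2 * (G\<^sup>2 * ((\<integral>z. qm z * L_f f g pY z False \<partial>N) + (\<integral>z. qm z * L_f f g pY z True \<partial>N)) - V_Y N qphi py pt j pY x)"
      unfolding VY using iL iV by simp
    finally show ?thesis .
  qed
  define a where "a t = (\<integral>z. ?q t z * L_f f g pY z t \<partial>N)" for t
  define b where "b t = (\<integral>z. ?q (\<not> t) z * L_f f g pY z t \<partial>N)" for t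
  define K where "K t = (\<integral>z. ?q t z * ln (?q t z / ?q (\<not> t) z) \<partial>N)" for t
  have epsF: "eps_F N qphi py f g pY x t = a t" for t unfolding eps_F_def a_def ..
  have PK: "0 \<le> K t \<and> b t - a t \<le> M * sqrt (K t / 2)" for t
  proof -
    note P = pinsker_int[of "?q t" N "?q (\<not> t)" "\<lambda>z. L_f f g pY z t" M, OF qm qm Lm qn qn _ _ M0 qi qi q1 q1 KL_ac[of t] KL_int[of t]]
    show ?thesis using P pw unfolding a_def b_def K_def by auto
  qed
  have KL: "D_KL N (?q t) (?q (\<not> t)) = K t" for t
  proof -
    have "D_KL N (?q t) (?q (\<not> t)) = (\<integral>z. ?q t z * log (exp 1) (?q t z / ?q (\<not> t) z) \<partial>N)"
      unfolding D_KL_def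
      by (rule N.KL_density_density) (use qn KL_ac[of t] in \<open>auto intro!: AE_I2\<close>)
    then show ?thesis by (simp add: K_def log_def)
  qed
  have Dbal: "D_bal N qphi py x = sqrt (K True / 2) + sqrt (K False / 2)"
    unfolding D_bal_def sum_bool KL by simp
  have I: "(\<integral>z. qm z * L_f f g pY z t \<partial>N) = pt x t * a t + pt x (\<not> t) * b t" for t
  proof -
    have "(\<integral>z. qm z * L_f f g pY z t \<partial>N)
        = (\<integral>z. pt x True * (?q True z * L_f f g pY z t) + pt x False * (?q False z * L_f f g pY z t) \<partial>N)"
      unfolding qm_eq by (simp add: algebra_simps)
    also have "\<dots> = pt x True * (\<integral>z. ?q True z * L_f f g pY z t \<partial>N) + pt x False * (\<integral>z. ?q False z * L_f f g pY z t \<partial>N)"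
      using iqL by simp
    finally show ?thesis unfolding a_def b_def by (cases t) auto
  qed
  have Ib: "(\<integral>z. qm z * L_f f g pY z t \<partial>N) \<le> a t + M * sqrt (K t / 2)" for t
  proof -
    have p1: "pt x t + pt x (\<not> t) = 1" using pt_sum by (cases t) auto
    have s0: "0 \<le> M * sqrt (K t / 2)" using PK[of t] M0 by simp
    have "pt x (\<not> t) * (b t - a t) \<le> pt x (\<not> t) * (M * sqrt (K t / 2))"
      using PK[of t] pt_nonneg by (intro mult_left_mono) auto
    also have "\<dots> \<le> M * sqrt (K t / 2)"
      using s0 pt_nonneg[of "\<not> t"] pt_nonneg[of t] p1 by (intro mult_left_le_one_le) auto
    finally have "pt x (\<not> t) * (b t - a t) \<le> M * sqrt (K t / 2)" .
    moreover have "pt x t * a t + pt x (\<not> t) * b t = a t + pt x (\<not> t) * (b t - a t)"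
    proof -
      have e: "pt x t = 1 - pt x (\<not> t)" using p1 by simp
      show ?thesis unfolding e by (simp add: algebra_simps)
    qed
    ultimately show ?thesis unfolding I by simp
  qed
  have "G\<^sup>2 * ((\<integral>z. qm z * L_f f g pY z False \<partial>N) + (\<integral>z. qm z * L_f f g pY z True \<partial>N))
      \<le> G\<^sup>2 * (a False + a True + M * D_bal N qphi py x)"
    using Ib[of False] Ib[of True] unfolding Dbal by (intro mult_left_mono) (auto simp: algebra_simps)
  then show ?thesis using step1 unfolding epsF by simp
qed

end
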